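(* There are absolute constants $c>0$ and $n_0$ such that for every $n\ge n_0$ and every integer $G$ with $1\le G\le 2^{n/4}$, there exists a Boolean function $f:\{0,1\}^n\to\{0,1\}$ that is computed by some formula on $n$ input variables with at most $G$ gates, but every formula computing $f$ has formula size at least $c\,nG/\log n$.
   Context: A formula on input variables $x_1,\dots,x_n$ is a rooted tree whose leaves are labeled by input variables (the same variable may label many leaves) and whose internal vertices are \textsc{not} gates (fanin 1) or unbounded-fanin \textsc{and}/\textsc{or} gates. The formula size is the number of leaves (inputs counted with multiplicity); the gate count is the number of \textsc{and} and \textsc{or} gates. *)

theory Defs
  imports Complex_Main
begin

datatype formula = Var nat | Neg formula | AndG "formula list" | OrG "formula list"

fun eval :: "formula \<Rightarrow> (nat \<Rightarrow> bool) \<Rightarrow> bool" where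
  "eval (Var i) x = x i"
| "eval (Neg \<phi>) x = (\<not> eval \<phi> x)"
| "eval (AndG \<phi>s) x = (\<forall>\<phi>\<in>set \<phi>s. eval \<phi> x)"
| "eval (OrG \<phi>s) x = (\<exists>\<phi>\<in>set \<phi>s. eval \<phi> x)"

fun fsize :: "formula \<Rightarrow> nat" where
  "fsize (Var i) = 1"
| "fsize (Neg \<phi>) = fsize \<phi>"
| "fsize (AndG \<phi>s) = sum_list (map fsize \<phi>s)"
| "fsize (OrG \<phi>s) = sum_list (map fsize \<phi>s)"

fun gates :: "formula \<Rightarrow> nat" where
  "gates (Var i) = 0"
| "gates (Neg \<phi>) = gates \<phi>"
| "gates (AndG \<phi>s) = Suc (sum_list (map gates \<phi>s))"
| "gates (OrG \<phi>s) = Suc (sum_list (map gates \<phi>s))"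

fun vars :: "formula \<Rightarrow> nat set" where
  "vars (Var i) = {i}"
| "vars (Neg \<phi>) = vars \<phi>"
| "vars (AndG \<phi>s) = (\<Union>\<phi>\<in>set \<phi>s. vars \<phi>)"
| "vars (OrG \<phi>s) = (\<Union>\<phi>\<in>set \<phi>s. vars \<phi>)"

definition computes :: "nat \<Rightarrow> formula \<Rightarrow> (bool list \<Rightarrow> bool) \<Rightarrow> bool" where
  "computes n \<phi> f \<longleftrightarrow> vars \<phi> \<subseteq> {..<n} \<and>
     (\<forall>xs. length xs = n \<longrightarrow> eval \<phi> (\<lambda>i. xs ! i) = f xs)"

end

theory Submission
  imports Defs "HOL-Library.FuncSet"
begin


fun nodes :: "formula \<Rightarrow> nat" where
  "nodes (Var i) = 1"
| "nodes (Neg \<phi>) = Suc (nodes \<phi>)"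
| "nodes (AndG \<phi>s) = Suc (sum_list (map nodes \<phi>s))"
| "nodes (OrG \<phi>s) = Suc (sum_list (map nodes \<phi>s))"

fun negf :: "formula \<Rightarrow> formula" where
  "negf (Neg \<psi>) = \<psi>"
| "negf (AndG []) = OrG []"
| "negf (OrG []) = AndG []"
| "negf \<psi> = Neg \<psi>"

fun mkAnd :: "formula list \<Rightarrow> formula" where
  "mkAnd [] = AndG []"
| "mkAnd [\<psi>] = \<psi>"
| "mkAnd \<psi>s = AndG \<psi>s"

fun mkOr :: "formula list \<Rightarrow> formula" where
  "mkOr [] = OrG []"
| "mkOr [\<psi>] = \<psi>"
| "mkOr \<psi>s = OrG \<psi>s"

fun nrm :: "formula \<Rightarrow> formula" where
  "nrm (Var i) = Var i"
| "nrm (Neg \<phi>) = negf (nrm \<phi>)"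
| "nrm (AndG \<phi>s) = (let \<psi>s = map nrm \<phi>s in
     if OrG [] \<in> set \<psi>s then OrG [] else mkAnd (filter (\<lambda>\<psi>. \<psi> \<noteq> AndG []) \<psi>s))"
| "nrm (OrG \<phi>s) = (let \<psi>s = map nrm \<phi>s in
     if AndG [] \<in> set \<psi>s then AndG [] else mkOr (filter (\<lambda>\<psi>. \<psi> \<noteq> OrG []) \<psi>s))"

fun isNeg :: "formula \<Rightarrow> bool" where
  "isNeg (Neg _) = True"
| "isNeg _ = False"

definition good :: "formula \<Rightarrow> bool" where
  "good \<psi> \<longleftrightarrow> \<psi> = AndG [] \<or> \<psi> = OrG [] \<or>
     (1 \<le> fsize \<psi> \<and> nodes \<psi> + 3 \<le> 4 * fsize \<psi> + (if isNeg \<psi> then 1 else 0))"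

lemma eval_negf: "eval (negf \<psi>) x = (\<not> eval \<psi> x)"
  by (induction \<psi> rule: negf.induct) auto

lemma eval_mkAnd: "eval (mkAnd \<psi>s) x = (\<forall>\<psi>\<in>set \<psi>s. eval \<psi> x)"
  by (induction \<psi>s rule: mkAnd.induct) auto

lemma eval_mkOr: "eval (mkOr \<psi>s) x = (\<exists>\<psi>\<in>set \<psi>s. eval \<psi> x)"
  by (induction \<psi>s rule: mkOr.induct) auto

lemma eval_nrm: "eval (nrm \<phi>) x = eval \<phi> x"
proof (induction \<phi> rule: nrm.induct)
  case (3 \<phi>s)
  show ?case
  proof (cases "OrG [] \<in> set (map nrm \<phi>s)")
    case True
    then obtain \<phi> where p: "\<phi> \<in> set \<phi>s" "nrm \<phi> = OrG []" by auto
    with 3[of \<phi>] have e: "eval \<phi> x = eval (OrG []) x" by simp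
    have "nrm (AndG \<phi>s) = OrG []" using True by (simp add: Let_def)
    then show ?thesis using p e by auto
  next
    case False
    have "(\<forall>\<psi>\<in>set (filter (\<lambda>\<psi>. \<psi> \<noteq> AndG []) (map nrm \<phi>s)). eval \<psi> x) = (\<forall>\<phi>\<in>set \<phi>s. eval \<phi> x)"
    proof (intro iffI ballI)
      fix \<phi> assume H: "\<forall>\<psi>\<in>set (filter (\<lambda>\<psi>. \<psi> \<noteq> AndG []) (map nrm \<phi>s)). eval \<psi> x" and p: "\<phi> \<in> set \<phi>s"
      show "eval \<phi> x"
      proof (cases "nrm \<phi> = AndG []")
        case True with 3[OF p] show ?thesis by (metis eval.simps(3) empty_iff list.set(1))
      next
        case False with H p 3[OF p] show ?thesis by auto
      qed
    qed (use 3 in auto)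
    with False show ?thesis by (simp add: Let_def eval_mkAnd)
  qed
next
  case (4 \<phi>s)
  show ?case
  proof (cases "AndG [] \<in> set (map nrm \<phi>s)")
    case True
    then obtain \<phi> where p: "\<phi> \<in> set \<phi>s" "nrm \<phi> = AndG []" by auto
    with 4[of \<phi>] have e: "eval \<phi> x = eval (AndG []) x" by simp
    have "nrm (OrG \<phi>s) = AndG []" using True by (simp add: Let_def)
    then show ?thesis using p e by auto
  next
    case False
    have "(\<exists>\<psi>\<in>set (filter (\<lambda>\<psi>. \<psi> \<noteq> OrG []) (map nrm \<phi>s)). eval \<psi> x) = (\<exists>\<phi>\<in>set \<phi>s. eval \<phi> x)"
    proof
      assume "\<exists>\<phi>\<in>set \<phi>s. eval \<phi> x"
      then obtain \<phi> where p: "\<phi> \<in> set \<phi>s" and e: "eval \<phi> x" by blast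
      show "\<exists>\<psi>\<in>set (filter (\<lambda>\<psi>. \<psi> \<noteq> OrG []) (map nrm \<phi>s)). eval \<psi> x"
      proof (cases "nrm \<phi> = OrG []")
        case True with 4[OF p] e show ?thesis by (metis eval.simps(4) empty_iff list.set(1))
      next
        case False with e p 4[OF p] show ?thesis by auto
      qed
    qed (use 4 in auto)
    with False show ?thesis by (simp add: Let_def eval_mkOr)
  qed
qed (auto simp: eval_negf)

lemma vars_negf: "vars (negf \<psi>) = vars \<psi>"
  by (induction \<psi> rule: negf.induct) auto
lemma vars_mkAnd: "vars (mkAnd \<psi>s) = (\<Union>\<psi>\<in>set \<psi>s. vars \<psi>)"
  by (induction \<psi>s rule: mkAnd.induct) auto
lemma vars_mkOr: "vars (mkOr \<psi>s) = (\<Union>\<psi>\<in>set \<psi>s. vars \<psi>)"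
  by (induction \<psi>s rule: mkOr.induct) auto

lemma vars_nrm: "vars (nrm \<phi>) \<subseteq> vars \<phi>"
proof (induction \<phi> rule: nrm.induct)
  case (3 \<phi>s)
  have "vars (mkAnd (filter (\<lambda>\<psi>. \<psi> \<noteq> AndG []) (map nrm \<phi>s))) \<subseteq> vars (AndG \<phi>s)"
    unfolding vars_mkAnd using 3 by fastforce
  then show ?case by (simp add: Let_def)
next
  case (4 \<phi>s)
  have "vars (mkOr (filter (\<lambda>\<psi>. \<psi> \<noteq> OrG []) (map nrm \<phi>s))) \<subseteq> vars (OrG \<phi>s)"
    unfolding vars_mkOr using 4 by fastforce
  then show ?case by (simp add: Let_def)
qed (simp_all add: vars_negf)

lemma fsize_negf: "fsize (negf \<psi>) = fsize \<psi>"
  by (induction \<psi> rule: negf.induct) auto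
lemma fsize_mkAnd: "fsize (mkAnd \<psi>s) = sum_list (map fsize \<psi>s)"
  by (induction \<psi>s rule: mkAnd.induct) auto
lemma fsize_mkOr: "fsize (mkOr \<psi>s) = sum_list (map fsize \<psi>s)"
  by (induction \<psi>s rule: mkOr.induct) auto

lemma sum_list_filter_le: "sum_list (map f (filter P xs)) \<le> sum_list (map (f::_\<Rightarrow>nat) xs)"
  by (induction xs) auto

lemma sum_list_mono_nat: "(\<And>x. x \<in> set xs \<Longrightarrow> f x \<le> g x) \<Longrightarrow> sum_list (map f xs) \<le> sum_list (map (g::_\<Rightarrow>nat) xs)"
  by (induction xs) (auto intro: add_mono)

lemma fsize_nrm: "fsize (nrm \<phi>) \<le> fsize \<phi>"
proof (induction \<phi> rule: nrm.induct)
  case (3 \<phi>s)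
  have "sum_list (map fsize (filter (\<lambda>\<psi>. \<psi> \<noteq> AndG []) (map nrm \<phi>s))) \<le> sum_list (map fsize (map nrm \<phi>s))"
    by (rule sum_list_filter_le)
  also have "\<dots> \<le> sum_list (map fsize \<phi>s)"
    using 3 by (simp add: comp_def sum_list_mono_nat)
  finally show ?case by (simp add: Let_def fsize_mkAnd)
next
  case (4 \<phi>s)
  have "sum_list (map fsize (filter (\<lambda>\<psi>. \<psi> \<noteq> OrG []) (map nrm \<phi>s))) \<le> sum_list (map fsize (map nrm \<phi>s))"
    by (rule sum_list_filter_le)
  also have "\<dots> \<le> sum_list (map fsize \<phi>s)"
    using 4 by (simp add: comp_def sum_list_mono_nat)
  finally show ?case by (simp add: Let_def fsize_mkOr)
qed (auto simp: fsize_negf)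

lemma good_list:
  assumes "\<forall>\<psi>\<in>set \<psi>s. good \<psi> \<and> \<psi> \<noteq> AndG [] \<and> \<psi> \<noteq> OrG []"
  shows "sum_list (map nodes \<psi>s) + 2 * length \<psi>s \<le> 4 * sum_list (map fsize \<psi>s)
         \<and> length \<psi>s \<le> sum_list (map fsize \<psi>s)"
  using assms
proof (induction \<psi>s)
  case (Cons \<psi> \<psi>s)
  have g: "good \<psi>" "\<psi> \<noteq> AndG []" "\<psi> \<noteq> OrG []" using Cons.prems by auto
  then have "1 \<le> fsize \<psi> \<and> nodes \<psi> + 3 \<le> 4 * fsize \<psi> + (if isNeg \<psi> then 1 else 0)"
    unfolding good_def by blast
  moreover have "(if isNeg \<psi> then 1 else 0) \<le> (1::nat)" by simp
  ultimately have a: "1 \<le> fsize \<psi>" "nodes \<psi> + 2 \<le> 4 * fsize \<psi>" by linarith+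
  have "\<forall>\<psi>\<in>set \<psi>s. good \<psi> \<and> \<psi> \<noteq> AndG [] \<and> \<psi> \<noteq> OrG []" using Cons.prems by simp
  then have b: "sum_list (map nodes \<psi>s) + 2 * length \<psi>s \<le> 4 * sum_list (map fsize \<psi>s)"
         "length \<psi>s \<le> sum_list (map fsize \<psi>s)" using Cons.IH by auto
  show ?case using a b by simp
qed simp

lemma good_mkAnd:
  assumes "\<forall>\<psi>\<in>set \<psi>s. good \<psi> \<and> \<psi> \<noteq> AndG [] \<and> \<psi> \<noteq> OrG []"
  shows "good (mkAnd \<psi>s)"
proof (cases \<psi>s rule: mkAnd.cases)
  case (3 a b l)
  from good_list[OF assms] show ?thesis unfolding 3 good_def by auto
qed (use assms in \<open>auto simp: good_def\<close>)

lemma good_mkOr: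
  assumes "\<forall>\<psi>\<in>set \<psi>s. good \<psi> \<and> \<psi> \<noteq> AndG [] \<and> \<psi> \<noteq> OrG []"
  shows "good (mkOr \<psi>s)"
proof (cases \<psi>s rule: mkOr.cases)
  case (3 a b l)
  from good_list[OF assms] show ?thesis unfolding 3 good_def by auto
qed (use assms in \<open>auto simp: good_def\<close>)

lemma good_negf: "good \<psi> \<Longrightarrow> good (negf \<psi>)"
  by (induction \<psi> rule: negf.induct) (auto simp: good_def split: if_splits)

lemma good_nrm: "good (nrm \<phi>)"
proof (induction \<phi> rule: nrm.induct)
  case (1 i) then show ?case by (simp add: good_def)
next
  case (2 \<phi>) then show ?case by (simp add: good_negf)
next
  case (3 \<phi>s)
  show ?case
  proof (cases "OrG [] \<in> set (map nrm \<phi>s)")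
    case True
    then have "nrm (AndG \<phi>s) = OrG []" by (simp add: Let_def)
    then show ?thesis by (simp add: good_def)
  next
    case False
    then have eq: "nrm (AndG \<phi>s) = mkAnd (filter (\<lambda>\<psi>. \<psi> \<noteq> AndG []) (map nrm \<phi>s))" by (simp add: Let_def)
    have "\<forall>\<psi>\<in>set (filter (\<lambda>\<psi>. \<psi> \<noteq> AndG []) (map nrm \<phi>s)). good \<psi> \<and> \<psi> \<noteq> AndG [] \<and> \<psi> \<noteq> OrG []"
    proof
      fix \<psi> assume "\<psi> \<in> set (filter (\<lambda>\<psi>. \<psi> \<noteq> AndG []) (map nrm \<phi>s))"
      then obtain \<phi> where "\<phi> \<in> set \<phi>s" "\<psi> = nrm \<phi>" "\<psi> \<noteq> AndG []" by auto
      moreover have "nrm \<phi> \<noteq> OrG []" using False \<open>\<phi> \<in> set \<phi>s\<close> by (metis image_eqI list.set_map)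
      ultimately show "good \<psi> \<and> \<psi> \<noteq> AndG [] \<and> \<psi> \<noteq> OrG []" using 3 by auto
    qed
    then show ?thesis unfolding eq by (rule good_mkAnd)
  qed
next
  case (4 \<phi>s)
  show ?case
  proof (cases "AndG [] \<in> set (map nrm \<phi>s)")
    case True
    then have "nrm (OrG \<phi>s) = AndG []" by (simp add: Let_def)
    then show ?thesis by (simp add: good_def)
  next
    case False
    then have eq: "nrm (OrG \<phi>s) = mkOr (filter (\<lambda>\<psi>. \<psi> \<noteq> OrG []) (map nrm \<phi>s))" by (simp add: Let_def)
    have "\<forall>\<psi>\<in>set (filter (\<lambda>\<psi>. \<psi> \<noteq> OrG []) (map nrm \<phi>s)). good \<psi> \<and> \<psi> \<noteq> AndG [] \<and> \<psi> \<noteq> OrG []"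
    proof
      fix \<psi> assume "\<psi> \<in> set (filter (\<lambda>\<psi>. \<psi> \<noteq> OrG []) (map nrm \<phi>s))"
      then obtain \<phi> where "\<phi> \<in> set \<phi>s" "\<psi> = nrm \<phi>" "\<psi> \<noteq> OrG []" by auto
      moreover have "nrm \<phi> \<noteq> AndG []" using False \<open>\<phi> \<in> set \<phi>s\<close> by (metis image_eqI list.set_map)
      ultimately show "good \<psi> \<and> \<psi> \<noteq> AndG [] \<and> \<psi> \<noteq> OrG []" using 4 by auto
    qed
    then show ?thesis unfolding eq by (rule good_mkOr)
  qed
qed

lemma nodes_nrm: "nodes (nrm \<phi>) \<le> 4 * fsize \<phi> + 1"
proof -
  have "good (nrm \<phi>)" by (rule good_nrm)
  then have "nodes (nrm \<phi>) \<le> 4 * fsize (nrm \<phi>) + 1"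
    by (auto simp: good_def split: if_splits)
  with fsize_nrm[of \<phi>] show ?thesis by linarith
qed



fun enc :: "formula \<Rightarrow> nat list" where
  "enc (Var i) = [i+4]"
| "enc (Neg \<phi>) = 0 # enc \<phi>"
| "enc (AndG \<phi>s) = 1 # concat (map enc \<phi>s) @ [3]"
| "enc (OrG \<phi>s) = 2 # concat (map enc \<phi>s) @ [3]"

lemma enc_hd: "\<exists>t ts. enc \<phi> = t # ts \<and> t \<noteq> 3"
  by (cases \<phi>) auto

lemma list_prefix:
  assumes "\<forall>\<phi>\<in>set \<phi>s. \<forall>\<psi> r r'. enc \<phi> @ r = enc \<psi> @ r' \<longrightarrow> \<phi> = \<psi> \<and> r = r'"
    and "concat (map enc \<phi>s) @ 3 # r = concat (map enc \<psi>s) @ 3 # r'"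
  shows "\<phi>s = \<psi>s \<and> r = r'"
  using assms
proof (induction \<phi>s arbitrary: \<psi>s r r')
  case Nil
  show ?case
  proof (cases \<psi>s)
    case Nil with Nil.prems(2) show ?thesis by simp
  next
    case (Cons \<psi> \<psi>s')
    obtain t ts where "enc \<psi> = t # ts" "t \<noteq> 3" using enc_hd by blast
    with Nil.prems(2) Cons show ?thesis by simp
  qed
next
  case (Cons \<phi> \<phi>s)
  note prems = Cons.prems and IH = Cons.IH
  obtain t ts where tt: "enc \<phi> = t # ts" "t \<noteq> 3" using enc_hd by blast
  show ?case
  proof (cases \<psi>s)
    case Nil with prems(2) tt show ?thesis by simp
  next
    case (Cons \<psi> \<psi>s')
    note Cons2 = this
    have eq: "enc \<phi> @ (concat (map enc \<phi>s) @ 3 # r) = enc \<psi> @ (concat (map enc \<psi>s') @ 3 # r')"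
      using prems(2) Cons2 by simp
    have H: "\<forall>\<psi> r r'. enc \<phi> @ r = enc \<psi> @ r' \<longrightarrow> \<phi> = \<psi> \<and> r = r'" using prems(1) by (meson list.set_intros(1))
    have 12: "\<phi> = \<psi> \<and> concat (map enc \<phi>s) @ 3 # r = concat (map enc \<psi>s') @ 3 # r'"
      by (rule H[rule_format, OF eq])
    then have 1: "\<phi> = \<psi>" and 2: "concat (map enc \<phi>s) @ 3 # r = concat (map enc \<psi>s') @ 3 # r'" by simp_all
    have "\<forall>\<phi>\<in>set \<phi>s. \<forall>\<psi> r r'. enc \<phi> @ r = enc \<psi> @ r' \<longrightarrow> \<phi> = \<psi> \<and> r = r'" using prems(1) by (meson list.set_intros(2))
    from IH[OF this 2] have "\<phi>s = \<psi>s' \<and> r = r'" by simp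
    with 1 Cons2 show ?thesis by simp
  qed
qed

lemma enc_prefix: "enc \<phi> @ r = enc \<psi> @ r' \<Longrightarrow> \<phi> = \<psi> \<and> r = r'"
proof (induction \<phi> arbitrary: \<psi> r r')
  case (Var i)
  then show ?case by (cases \<psi>) auto
next
  case (Neg \<phi>)
  then show ?case by (cases \<psi>) auto
next
  case (AndG \<phi>s)
  show ?case
  proof (cases \<psi>)
    case (AndG \<psi>s)
    have "concat (map enc \<phi>s) @ 3 # r = concat (map enc \<psi>s) @ 3 # r'"
      using AndG.prems AndG by simp
    with list_prefix[of \<phi>s] AndG.IH have "\<phi>s = \<psi>s \<and> r = r'" by blast
    with AndG show ?thesis by simp
  qed (use AndG.prems in auto)
next
  case (OrG \<phi>s)
  show ?case
  proof (cases \<psi>)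
    case (OrG \<psi>s)
    have "concat (map enc \<phi>s) @ 3 # r = concat (map enc \<psi>s) @ 3 # r'"
      using OrG.prems OrG by simp
    with list_prefix[of \<phi>s] OrG.IH have "\<phi>s = \<psi>s \<and> r = r'" by blast
    with OrG show ?thesis by simp
  qed (use OrG.prems in auto)
qed

lemma inj_enc: "inj enc"
  by (rule injI) (use enc_prefix[where r="[]" and r'="[]"] in auto)

lemma length_enc: "length (enc \<phi>) \<le> 2 * nodes \<phi>"
proof (induction \<phi>)
  case (AndG \<phi>s)
  have "length (concat (map enc \<phi>s)) = sum_list (map (\<lambda>\<phi>. length (enc \<phi>)) \<phi>s)"
    by (simp add: length_concat comp_def)
  also have "\<dots> \<le> sum_list (map (\<lambda>\<phi>. 2 * nodes \<phi>) \<phi>s)"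
    using AndG by (intro sum_list_mono_nat) auto
  also have "\<dots> = 2 * sum_list (map nodes \<phi>s)"
    by (induction \<phi>s) auto
  finally show ?case by simp
next
  case (OrG \<phi>s)
  have "length (concat (map enc \<phi>s)) = sum_list (map (\<lambda>\<phi>. length (enc \<phi>)) \<phi>s)"
    by (simp add: length_concat comp_def)
  also have "\<dots> \<le> sum_list (map (\<lambda>\<phi>. 2 * nodes \<phi>) \<phi>s)"
    using OrG by (intro sum_list_mono_nat) auto
  also have "\<dots> = 2 * sum_list (map nodes \<phi>s)"
    by (induction \<phi>s) auto
  finally show ?case by simp
qed auto

lemma set_enc: "vars \<phi> \<subseteq> {..<n} \<Longrightarrow> set (enc \<phi>) \<subseteq> {..<n+4}"
  by (induction \<phi>) fastforce+

lemma geom: "(b::nat) \<ge> 2 \<Longrightarrow> (\<Sum>i\<le>M. b^i) \<le> b^(M+1)"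
proof (induction M)
  case (Suc M)
  have "(\<Sum>i\<le>Suc M. b^i) = (\<Sum>i\<le>M. b^i) + b^(Suc M)" by simp
  also have "\<dots> \<le> b^(Suc M) + b^(Suc M)" using Suc by simp
  also have "\<dots> \<le> b * b^(Suc M)" using Suc.prems
    by (metis mult_2 mult_le_mono1)
  finally show ?case by simp
qed simp

lemma count_formulas:
  shows "finite {\<phi>. vars \<phi> \<subseteq> {..<n} \<and> nodes \<phi> \<le> L}"
    and "card {\<phi>. vars \<phi> \<subseteq> {..<n} \<and> nodes \<phi> \<le> L} \<le> (n+4)^(2*L+1)"
proof -
  let ?P = "{\<phi>. vars \<phi> \<subseteq> {..<n} \<and> nodes \<phi> \<le> L}"
  let ?Ls = "{xs. set xs \<subseteq> {..<n+4} \<and> length xs \<le> 2*L}"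
  have fin: "finite ?Ls" by (rule finite_lists_length_le) simp
  have sub: "enc ` ?P \<subseteq> ?Ls"
  proof
    fix xs assume "xs \<in> enc ` ?P"
    then obtain \<phi> where "\<phi> \<in> ?P" "xs = enc \<phi>" by blast
    with set_enc[of \<phi> n] length_enc[of \<phi>] show "xs \<in> ?Ls" by auto
  qed
  have inj: "inj_on enc ?P" using inj_enc by (simp add: inj_on_def inj_def)
  show "finite ?P" by (rule inj_on_finite[OF inj sub fin])
  have "card ?P \<le> card ?Ls" by (rule card_inj_on_le[OF inj sub fin])
  also have "\<dots> = (\<Sum>i\<le>2*L. (n+4)^i)" by (subst card_lists_length_le) simp_all
  also have "\<dots> \<le> (n+4)^(2*L+1)" by (rule geom) simp
  finally show "card ?P \<le> (n+4)^(2*L+1)" .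
qed

definition R :: "nat \<Rightarrow> (bool list \<Rightarrow> bool) \<Rightarrow> bool list \<Rightarrow> bool" where
  "R n g = (\<lambda>xs. if length xs = n then g xs else False)"

lemma pigeon:
  assumes ex: "\<forall>S\<in>SS. \<exists>\<psi>. computes n \<psi> (F S) \<and> fsize \<psi> \<le> s"
    and inj: "inj_on (\<lambda>S. R n (F S)) SS"
  shows "card SS \<le> (n+4)^(8*s+3)"
proof -
  let ?P = "{\<phi>. vars \<phi> \<subseteq> {..<n} \<and> nodes \<phi> \<le> 4*s+1}"
  define E where "E \<phi> = R n (\<lambda>xs. eval \<phi> (\<lambda>i. xs ! i))" for \<phi>
  have sub: "(\<lambda>S. R n (F S)) ` SS \<subseteq> E ` ?P"
  proof
    fix g assume "g \<in> (\<lambda>S. R n (F S)) ` SS"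
    then obtain S where S: "S \<in> SS" "g = R n (F S)" by blast
    then obtain \<psi> where c: "computes n \<psi> (F S)" and fs: "fsize \<psi> \<le> s" using ex by blast
    have "nodes (nrm \<psi>) \<le> 4 * s + 1" using nodes_nrm[of \<psi>] fs by linarith
    moreover have "vars (nrm \<psi>) \<subseteq> {..<n}" using vars_nrm[of \<psi>] c unfolding computes_def by blast
    moreover have "g = E (nrm \<psi>)"
      using c S(2) unfolding E_def R_def computes_def by (auto simp: eval_nrm)
    ultimately show "g \<in> E ` ?P" by blast
  qed
  have finP: "finite ?P" by (rule count_formulas(1))
  have "card SS = card ((\<lambda>S. R n (F S)) ` SS)" by (rule card_image[OF inj, symmetric])
  also have "\<dots> \<le> card (E ` ?P)" by (rule card_mono[OF finite_imageI[OF finP] sub])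
  also have "\<dots> \<le> card ?P" by (rule card_image_le[OF finP])
  also have "\<dots> \<le> (n+4)^(2*(4*s+1)+1)" by (rule count_formulas(2))
  also have "2*(4*s+1)+1 = 8*s+3" by simp
  finally show ?thesis .
qed



lemma ln2_ge: "ln (2::real) \<ge> 1/2"
proof -
  have "ln (1/2::real) \<le> 1/2 - 1" by (rule ln_le_minus_one) simp
  moreover have "ln (1/2::real) = - ln 2" by (simp add: ln_div)
  ultimately show ?thesis by simp
qed

lemma arith_final:
  fixes n G :: nat and a e :: real
  assumes n: "n \<ge> 10000" and G: "G \<ge> 1"
    and a: "a \<ge> real n * real G / 4"
    and ineq: "a \<le> (8 * (1/800 * real n * real G / ln (real n)) + 3) * log 2 (real n + 4)"
  shows False
proof -
  define L where "L = ln (real n)"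
  have n0: "real n \<ge> 10000" using n by simp
  have L1: "L \<ge> 1"
  proof -
    have "ln (4::real) = 2 * ln 2" using ln_mult[of 2 "2::real"] by simp
    moreover have "ln 4 \<le> L" unfolding L_def using n0 by simp
    ultimately show ?thesis using ln2_ge by linarith
  qed
  have l2: "log 2 (real n + 4) \<le> 3 * L"
  proof -
    have "ln (real n + 4) \<le> ln (2 * real n)" using n0 by simp
    also have "\<dots> = ln 2 + L" unfolding L_def using n0 by (simp add: ln_mult)
    finally have h: "ln (real n + 4) \<le> ln 2 + L" .
    have "log 2 (real n + 4) = ln (real n + 4) / ln 2" by (simp add: log_def)
    also have "\<dots> \<le> (ln 2 + L) / ln 2" using h ln2_ge by (intro divide_right_mono) auto
    also have "\<dots> = 1 + L / ln 2" using ln2_ge by (simp add: field_simps)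
    also have "\<dots> \<le> 1 + 2 * L"
    proof -
      have "L / ln 2 \<le> L / (1/2)" using ln2_ge L1 by (intro divide_left_mono) auto
      then show ?thesis by simp
    qed
    also have "\<dots> \<le> 3 * L" using L1 by simp
    finally show ?thesis .
  qed
  have sq: "sqrt (real n) \<ge> 100"
  proof -
    have "sqrt (10000::real) = 100" by (simp add: real_sqrt_eq_iff)
    then show ?thesis using real_sqrt_le_mono[OF n0] by simp
  qed
  have Lsq: "L \<le> 2 * sqrt (real n)"
  proof -
    have "ln (sqrt (real n)) \<le> sqrt (real n) - 1" using sq n by (intro ln_le_minus_one) simp
    moreover have "ln (sqrt (real n)) = L / 2" unfolding L_def by (simp add: ln_sqrt)
    ultimately show ?thesis by simp
  qed
  have nsq: "real n = sqrt (real n) * sqrt (real n)" by simp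
  have "9 * L \<le> 18 * sqrt (real n)" using Lsq by simp
  also have "\<dots> \<le> (18/100) * real n"
  proof -
    have "100 * sqrt (real n) \<le> sqrt (real n) * sqrt (real n)" using sq by (intro mult_right_mono) auto
    then have "100 * sqrt (real n) \<le> real n" using nsq by simp
    then show ?thesis by linarith
  qed
  finally have LL: "9 * L \<le> (18/100) * real n" .
  have Gr: "real G \<ge> 1" using G by simp
  have nG: "real n * real G \<ge> real n" using Gr n0 by (simp add: mult_le_cancel_left1)
  define X where "X = 1/800 * real n * real G / L"
  have XL: "X * L = real n * real G / 800" unfolding X_def using L1 by simp
  have X0: "X \<ge> 0" unfolding X_def using L1 by simp
  have "a \<le> (8 * X + 3) * log 2 (real n + 4)" using ineq unfolding X_def L_def .
  also have "\<dots> \<le> (8 * X + 3) * (3 * L)" using l2 X0 by (intro mult_left_mono) auto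
  also have "\<dots> = 24 * (X * L) + 9 * L" by (simp add: algebra_simps)
  also have "\<dots> \<le> 24 * (real n * real G / 800) + (18/100) * (real n * real G)"
    using XL LL nG by linarith
  finally have "a \<le> 24 * (real n * real G / 800) + (18/100) * (real n * real G)" .
  moreover have "real n * real G > 0" using n0 Gr by simp
  ultimately show False using a by linarith
qed



definition lit :: "nat \<Rightarrow> nat \<Rightarrow> formula" where
  "lit j i = (if bit j i then Var i else Neg (Var i))"

definition tm :: "nat \<Rightarrow> nat \<Rightarrow> nat set \<Rightarrow> formula" where
  "tm k j T = AndG (map (lit j) [0..<k] @ map Var (sorted_list_of_set T))"

definition mm :: "nat \<Rightarrow> nat" where
  "mm G = (if G \<le> 2 then 1 else G - 1)"

definition Phi :: "nat \<Rightarrow> nat \<Rightarrow> (nat \<Rightarrow> nat set) \<Rightarrow> formula" where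
  "Phi k G S = (if G \<le> 2 then tm k 0 (S 0) else OrG (map (\<lambda>j. tm k j (S j)) [0..<G-1]))"

lemma eval_lit: "eval (lit j i) x = (x i = bit j i)"
  by (simp add: lit_def)

lemma eval_tm: "finite T \<Longrightarrow> eval (tm k j T) x = ((\<forall>i<k. x i = bit j i) \<and> (\<forall>i\<in>T. x i))"
proof -
  assume fin: "finite T"
  have se: "set (map (lit j) [0..<k] @ map Var (sorted_list_of_set T)) = lit j ` {0..<k} \<union> Var ` T"
    using fin by simp
  have "eval (tm k j T) x = (\<forall>\<phi>\<in>lit j ` {0..<k} \<union> Var ` T. eval \<phi> x)"
    unfolding tm_def eval.simps se ..
  also have "\<dots> = ((\<forall>i\<in>{0..<k}. eval (lit j i) x) \<and> (\<forall>i\<in>T. eval (Var i) x))"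
    by blast
  finally have "eval (tm k j T) x = ((\<forall>i\<in>{0..<k}. eval (lit j i) x) \<and> (\<forall>i\<in>T. eval (Var i) x))" .
  then show ?thesis by (auto simp: eval_lit)
qed

lemma eval_Phi:
  assumes "\<forall>j<mm G. finite (S j)"
  shows "eval (Phi k G S) x = (\<exists>j<mm G. (\<forall>i<k. x i = bit j i) \<and> (\<forall>i\<in>S j. x i))"
proof (cases "G \<le> 2")
  case True
  then have "mm G = 1" by (simp add: mm_def)
  with True assms show ?thesis by (simp add: Phi_def eval_tm)
next
  case False
  then have m: "mm G = G - 1" by (simp add: mm_def)
  have "eval (Phi k G S) x = (\<exists>j<G-1. eval (tm k j (S j)) x)"
    using False by (auto simp: Phi_def)
  also have "\<dots> = (\<exists>j<mm G. (\<forall>i<k. x i = bit j i) \<and> (\<forall>i\<in>S j. x i))"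
    using assms m by (auto simp: eval_tm)
  finally show ?thesis .
qed

lemma gates_lit: "gates (lit j i) = 0"
  by (cases "bit j i") (simp_all add: lit_def)

lemma gates_tm: "gates (tm k j T) = 1"
proof -
  have "\<forall>\<phi>\<in>set (map (lit j) [0..<k] @ map Var (sorted_list_of_set T)). gates \<phi> = 0"
    using gates_lit by auto
  then have "sum_list (map gates (map (lit j) [0..<k] @ map Var (sorted_list_of_set T))) = 0"
    by (simp only: sum_list_eq_0_iff) auto
  then show ?thesis unfolding tm_def by simp
qed

lemma gates_Phi: assumes G1: "1 \<le> G" shows "gates (Phi k G S) \<le> G"
proof (cases "G \<le> 2")
  case True then show ?thesis using G1 by (simp add: Phi_def gates_tm)
next
  case False
  have "\<And>xs. sum_list (map gates (map (\<lambda>j. tm k j (S j)) xs)) = length xs"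
    subgoal for xs by (induction xs) (auto simp: gates_tm)
    done
  with False show ?thesis by (simp add: Phi_def)
qed

lemma vars_tm: "finite T \<Longrightarrow> vars (tm k j T) \<subseteq> {..<k} \<union> T"
  unfolding tm_def lit_def by auto

lemma vars_Phi:
  assumes "\<forall>j<mm G. finite (S j) \<and> S j \<subseteq> {k..<n}" "k \<le> n"
  shows "vars (Phi k G S) \<subseteq> {..<n}"
proof (cases "G \<le> 2")
  case True
  then have "mm G = 1" by (simp add: mm_def)
  with assms have "finite (S 0)" "S 0 \<subseteq> {k..<n}" by auto
  moreover have "vars (tm k 0 (S 0)) \<subseteq> {..<k} \<union> S 0" using vars_tm[of "S 0" k 0] \<open>finite (S 0)\<close> by simp
  moreover have "{..<k} \<union> S 0 \<subseteq> {..<n}" using \<open>S 0 \<subseteq> {k..<n}\<close> assms(2) by auto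
  ultimately have "vars (tm k 0 (S 0)) \<subseteq> {..<n}" by blast
  then show ?thesis using True by (simp add: Phi_def)
next
  case False
  then have m: "mm G = G - 1" by (simp add: mm_def)
  show ?thesis
  proof
    fix v assume "v \<in> vars (Phi k G S)"
    then obtain j where j: "j < G - 1" "v \<in> vars (tm k j (S j))" using False by (auto simp: Phi_def)
    with assms m have "finite (S j)" "S j \<subseteq> {k..<n}" by auto
    moreover have "{..<k} \<union> S j \<subseteq> {..<n}" using \<open>S j \<subseteq> {k..<n}\<close> assms(2) by auto
    ultimately show "v \<in> {..<n}" using vars_tm[of "S j" k j] j by blast
  qed
qed

lemma bits_eq:
  fixes a b :: nat
  assumes "a < 2^k" "b < 2^k" "\<forall>i<k. bit a i = bit b i"
  shows "a = b"
proof -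
  have "take_bit k a = a" "take_bit k b = b" using assms by (simp_all add: take_bit_nat_eq_self_iff)
  moreover have "take_bit k a = take_bit k b"
  proof (rule bit_eqI)
    fix i
    show "bit (take_bit k a) i \<longleftrightarrow> bit (take_bit k b) i"
    proof (cases "i < k")
      case True
      then show ?thesis using assms(3) by (simp add: bit_take_bit_iff)
    next
      case False
      then show ?thesis by (simp add: bit_take_bit_iff)
    qed
  qed
  ultimately show ?thesis by metis
qed

definition FF :: "nat \<Rightarrow> nat \<Rightarrow> (nat \<Rightarrow> nat set) \<Rightarrow> bool list \<Rightarrow> bool" where
  "FF n G S = (\<lambda>xs. eval (Phi (n div 4 + 1) G S) (\<lambda>i. xs ! i))"

lemma one_dir:
  assumes k: "k \<le> n" and mk: "mm G \<le> 2^k"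
    and S: "\<forall>j<mm G. finite (S j) \<and> S j \<subseteq> {k..<n}"
    and T: "\<forall>j<mm G. finite (T j) \<and> T j \<subseteq> {k..<n}"
    and eq: "eval (Phi k G S) (\<lambda>i. xs ! i) = eval (Phi k G T) (\<lambda>i. xs ! i)"
    and xs: "xs = map (\<lambda>i. if i < k then bit j i else i \<in> S j) [0..<n]"
    and j: "j < mm G"
  shows "T j \<subseteq> S j"
proof -
  have nth: "\<And>i. i < n \<Longrightarrow> xs ! i = (if i < k then bit j i else i \<in> S j)" using xs by simp
  have "(\<forall>i<k. xs ! i = bit j i)" using nth k by auto
  moreover have "(\<forall>i\<in>S j. xs ! i)"
  proof
    fix i assume i: "i \<in> S j"
    have "S j \<subseteq> {k..<n}" using S j by blast
    with i have "i \<in> {k..<n}" by blast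
    then have "k \<le> i" "i < n" by auto
    with nth i show "xs ! i" by auto
  qed
  ultimately have "eval (Phi k G S) (\<lambda>i. xs ! i)" using S j by (subst eval_Phi) auto
  then have "eval (Phi k G T) (\<lambda>i. xs ! i)" using eq by simp
  then obtain j' where j': "j' < mm G" "\<forall>i<k. xs ! i = bit j' i" "\<forall>i\<in>T j'. xs ! i"
    using T by (subst (asm) eval_Phi) auto
  have "\<forall>i<k. bit j' i = bit j i" using j'(2) nth k by auto
  then have "j' = j" using bits_eq[of j' k j] j j' mk by auto
  show "T j \<subseteq> S j"
  proof
    fix i assume "i \<in> T j"
    have "T j \<subseteq> {k..<n}" using T j by blast
    with \<open>i \<in> T j\<close> have "i \<in> {k..<n}" by blast
    then have "k \<le> i" "i < n" by auto
    with j'(3) \<open>i \<in> T j\<close> \<open>j' = j\<close> nth show "i \<in> S j" by auto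
  qed
qed


lemma main:
  fixes n G :: nat
  assumes n: "n \<ge> 10000" and G1: "1 \<le> G" and Gb: "real G \<le> 2 powr (real n / 4)"
  shows "\<exists>f :: bool list \<Rightarrow> bool.
              (\<exists>\<phi>. computes n \<phi> f \<and> gates \<phi> \<le> G) \<and>
              (\<forall>\<psi>. computes n \<psi> f \<longrightarrow> real (fsize \<psi>) \<ge> 1/800 * real n * real G / ln (real n))"
proof (rule ccontr)
  assume neg: "\<not> ?thesis"
  define k where "k = n div 4 + 1"
  define m where "m = mm G"
  define SS where "SS = (\<Pi>\<^sub>E j\<in>{..<m}. Pow {k..<n})"
  define X where "X = 1/800 * real n * real G / ln (real n)"
  have kn: "k \<le> n" unfolding k_def using n by simp
  have mG: "m \<le> G" "G \<le> 2 * m" unfolding m_def mm_def using G1 by auto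
  have Gk: "G \<le> 2^k"
  proof -
    have "n \<le> 4 * k"
    proof -
      define q where "q = n div 4"
      define r where "r = n mod 4"
      have "n = q * 4 + r" unfolding q_def r_def by simp
      moreover have "r < 4" unfolding r_def by simp
      ultimately show ?thesis unfolding k_def q_def[symmetric] by simp
    qed
    then have "real n \<le> real (4 * k)" by (simp only: of_nat_le_iff)
    then have "real n / 4 \<le> real k" by simp
    then have "2 powr (real n / 4) \<le> 2 powr (real k)" by (intro powr_mono) auto
    also have "\<dots> = 2^k" by (simp add: powr_realpow)
    finally have "real G \<le> 2^k" using Gb by linarith
    then show ?thesis by (metis of_nat_le_iff of_nat_numeral of_nat_power)
  qed
  have mk: "m \<le> 2^k" using mG Gk by linarith
  have SSprop: "\<forall>j<m. finite (S j) \<and> S j \<subseteq> {k..<n}" if "S \<in> SS" for S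
  proof (intro allI impI conjI)
    fix j assume "j < m"
    then have "S j \<in> Pow {k..<n}" using that unfolding SS_def PiE_iff by blast
    then show "S j \<subseteq> {k..<n}" by blast
    then show "finite (S j)" by (rule finite_subset) simp
  qed
  have FF_eq: "FF n G S = (\<lambda>xs. eval (Phi k G S) (\<lambda>i. xs ! i))" for S
    unfolding FF_def k_def ..
  have comp: "computes n (Phi k G S) (FF n G S)" if "S \<in> SS" for S
    unfolding computes_def FF_eq
    using vars_Phi[of G S k n] SSprop[OF that] kn unfolding m_def by auto
  have ex: "\<forall>S\<in>SS. \<exists>\<psi>. computes n \<psi> (FF n G S) \<and> fsize \<psi> \<le> nat \<lfloor>X\<rfloor>"
  proof
    fix S assume S: "S \<in> SS"
    have "\<not> (\<forall>\<psi>. computes n \<psi> (FF n G S) \<longrightarrow> real (fsize \<psi>) \<ge> X)"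
    proof
      assume H: "\<forall>\<psi>. computes n \<psi> (FF n G S) \<longrightarrow> real (fsize \<psi>) \<ge> X"
      have "(\<exists>\<phi>. computes n \<phi> (FF n G S) \<and> gates \<phi> \<le> G)"
        using comp[OF S] gates_Phi[OF G1, of k S] by blast
      with H have "\<exists>f :: bool list \<Rightarrow> bool.
              (\<exists>\<phi>. computes n \<phi> f \<and> gates \<phi> \<le> G) \<and>
              (\<forall>\<psi>. computes n \<psi> f \<longrightarrow> real (fsize \<psi>) \<ge> 1/800 * real n * real G / ln (real n))"
        unfolding X_def by (intro exI[of _ "FF n G S"]) simp
      with neg show False by contradiction
    qed
    then obtain \<psi> where "computes n \<psi> (FF n G S)" "real (fsize \<psi>) < X" by force
    then show "\<exists>\<psi>. computes n \<psi> (FF n G S) \<and> fsize \<psi> \<le> nat \<lfloor>X\<rfloor>"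
      by (intro exI[of _ \<psi>]) (auto intro: le_nat_floor)
  qed
  have inj: "inj_on (\<lambda>S. R n (FF n G S)) SS"
  proof (rule inj_onI)
    fix S T assume S: "S \<in> SS" and T: "T \<in> SS" and eqR: "R n (FF n G S) = R n (FF n G T)"
    have eqx: "eval (Phi k G S) (\<lambda>i. xs ! i) = eval (Phi k G T) (\<lambda>i. xs ! i)" if "length xs = n" for xs
      using fun_cong[OF eqR, of xs] that unfolding R_def FF_eq by simp
    show "S = T"
    proof (rule extensionalityI)
      show "S \<in> extensional {..<m}" "T \<in> extensional {..<m}" using S T unfolding SS_def PiE_iff by auto
    next
      fix j assume j: "j \<in> {..<m}"
      have mk': "mm G \<le> 2^k" and j': "j < mm G" using mk j unfolding m_def by auto
      have S': "\<forall>j<mm G. finite (S j) \<and> S j \<subseteq> {k..<n}" using SSprop[OF S] unfolding m_def .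
      have T': "\<forall>j<mm G. finite (T j) \<and> T j \<subseteq> {k..<n}" using SSprop[OF T] unfolding m_def .
      define xs1 where "xs1 = map (\<lambda>i. if i < k then bit j i else i \<in> S j) [0..<n]"
      define xs2 where "xs2 = map (\<lambda>i. if i < k then bit j i else i \<in> T j) [0..<n]"
      have e1: "eval (Phi k G S) (\<lambda>i. xs1 ! i) = eval (Phi k G T) (\<lambda>i. xs1 ! i)"
        by (rule eqx) (simp add: xs1_def)
      have e2: "eval (Phi k G T) (\<lambda>i. xs2 ! i) = eval (Phi k G S) (\<lambda>i. xs2 ! i)"
        by (rule eqx[symmetric]) (simp add: xs2_def)
      have "T j \<subseteq> S j" by (rule one_dir[OF kn mk' S' T' e1 xs1_def j'])
      moreover have "S j \<subseteq> T j" by (rule one_dir[OF kn mk' T' S' e2 xs2_def j'])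
      ultimately show "S j = T j" by blast
    qed
  qed
  have card: "card SS \<le> (n+4)^(8 * nat \<lfloor>X\<rfloor> + 3)"
    by (rule pigeon[OF ex inj])
  have cardSS: "card SS = 2^((n-k)*m)"
    unfolding SS_def by (simp add: card_PiE card_Pow power_mult)
  define a where "a = (n-k)*m"
  define e where "e = 8 * nat \<lfloor>X\<rfloor> + 3"
  have pow: "(2::nat)^a \<le> (n+4)^e" using card cardSS unfolding a_def e_def by simp
  have X0: "X \<ge> 0" unfolding X_def using n by simp
  have la: "real a \<le> real e * log 2 (real n + 4)"
  proof -
    have "real ((2::nat)^a) \<le> real ((n+4)^e)" using pow by (simp only: of_nat_le_iff)
    then have "log 2 (real ((2::nat)^a)) \<le> log 2 (real ((n+4)^e))"
      by (subst log_le_cancel_iff) auto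
    then show ?thesis by (simp add: log_nat_power)
  qed
  have "real e \<le> 8 * X + 3" unfolding e_def using of_nat_floor[OF X0] by simp
  then have "real e * log 2 (real n + 4) \<le> (8 * X + 3) * log 2 (real n + 4)"
    by (intro mult_right_mono) auto
  with la have ineq: "real a \<le> (8 * X + 3) * log 2 (real n + 4)" by linarith
  have nk: "2 * (n - k) \<ge> n"
  proof -
    define q where "q = n div 4"
    have "q * 4 \<le> n" unfolding q_def by simp
    then show ?thesis unfolding k_def q_def[symmetric] using n by linarith
  qed
  have "real n * real G / 4 \<le> real (n - k) * real m"
  proof -
    have "real n \<le> 2 * real (n - k)" using nk by linarith
    moreover have "real G \<le> 2 * real m" using mG by linarith
    ultimately have "real n * real G \<le> (2 * real (n - k)) * (2 * real m)"
      by (intro mult_mono) auto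
    then show ?thesis by simp
  qed
  then have "real a \<ge> real n * real G / 4" unfolding a_def by simp
  then show False using arith_final[OF n G1 _ ineq[unfolded X_def]] by blast
qed

theorem proposition1:
  shows "\<exists>c::real. c > 0 \<and> (\<exists>n0::nat. \<forall>n\<ge>n0. \<forall>G::nat.
           1 \<le> G \<and> real G \<le> 2 powr (real n / 4) \<longrightarrow>
           (\<exists>f :: bool list \<Rightarrow> bool.
              (\<exists>\<phi>. computes n \<phi> f \<and> gates \<phi> \<le> G) \<and>
              (\<forall>\<psi>. computes n \<psi> f \<longrightarrow> real (fsize \<psi>) \<ge> c * real n * real G / ln (real n))))"
proof (intro exI[of _ "1/800::real"] conjI exI[of _ "10000::nat"] allI impI)
  show "(0::real) < 1/800" by simp
next
  fix n G :: nat
  assume n: "10000 \<le> n" and h: "1 \<le> G \<and> real G \<le> 2 powr (real n / 4)"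
  from h have G1: "1 \<le> G" and Gb: "real G \<le> 2 powr (real n / 4)" by simp_all
  show "\<exists>f :: bool list \<Rightarrow> bool.
              (\<exists>\<phi>. computes n \<phi> f \<and> gates \<phi> \<le> G) \<and>
              (\<forall>\<psi>. computes n \<psi> f \<longrightarrow> real (fsize \<psi>) \<ge> 1/800 * real n * real G / ln (real n))"
    by (rule main[OF n G1 Gb])
qed


end
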